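(* Assume $f$ is in Case 2. Let $l>0$ if $\delta\le d$, and $0<l<\alpha$ if $\delta>d$. Then there exist positive numbers $r_1,r_2$, which can be taken arbitrarily small, such that $f(U^l_{r_1,r_2})\subset U^l_{r_1,r_2}$, where $U^l_{r_1,r_2}=\{|z|<r_1,\ |w|<r_2|z|^l\}$.
   Context: Let $f(z,w)=(p(z),q(z,w))$ be a holomorphic skew product defined near the origin of $\mathbb{C}^2$ with $p(z)=az^{\delta}+O(z^{\delta+1})$, $a\neq0$, $\delta\ge2$, and $q(z,w)=\sum_{i,j\ge0}b_{ij}z^iw^j$ with $b_{00}=b_{01}=0$. The Newton polygon $N(q)$ is the convex hull of $\bigcup_{b_{ij}\ne0}\{(x,y):x\ge i,\ y\ge j\}$, with vertices $(n_1,m_1),\dots,(n_s,m_s)$, $n_1<\dots<n_s$, $m_1>\dots>m_s$, $s>1$. $T_{s-1}$ is the $y$-intercept of the line through $(n_{s-1},m_{s-1})$ and $(n_s,m_s)$. Case 2 means $\delta\le T_{s-1}$; then set $(\gamma,d)=(n_s,m_s)$ (so $\gamma>0$) and, when $\delta\neq d$, $\alpha=\gamma/(\delta-d)$. *)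

theory Defs
  imports "HOL-Analysis.Analysis"
begin

definition newton_polygon :: "(nat \<Rightarrow> nat \<Rightarrow> complex) \<Rightarrow> (real \<times> real) set" where
  "newton_polygon b =
     convex hull (\<Union>{ {xy. fst xy \<ge> real i \<and> snd xy \<ge> real j} | i j. b i j \<noteq> 0 })"

definition y_intercept :: "real \<times> real \<Rightarrow> real \<times> real \<Rightarrow> real" where
  "y_intercept P Q = snd P - fst P * (snd Q - snd P) / (fst Q - fst P)"

definition U_region :: "real \<Rightarrow> real \<Rightarrow> real \<Rightarrow> (complex \<times> complex) set" where
  "U_region l r1 r2 = {(z, w). norm z < r1 \<and> norm w < r2 * norm z powr l}"

end

theory Submission
  imports Defs
begin



definition np_gen :: "(nat \<Rightarrow> nat \<Rightarrow> complex) \<Rightarrow> (real \<times> real) set" where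
  "np_gen b = \<Union>{ {xy. fst xy \<ge> real i \<and> snd xy \<ge> real j} | i j. b i j \<noteq> 0 }"

lemma np_eq: "newton_polygon b = convex hull (np_gen b)"
  unfolding newton_polygon_def np_gen_def by (rule refl)

lemma np_gen_mem:
  "xy \<in> np_gen b \<longleftrightarrow> (\<exists>i j. b i j \<noteq> 0 \<and> fst xy \<ge> real i \<and> snd xy \<ge> real j)"
  unfolding np_gen_def by (simp add: Union_eq) (auto)

lemma np_support: "b i j \<noteq> 0 \<Longrightarrow> (real i, real j) \<in> newton_polygon b"
  unfolding np_eq by (rule hull_inc) (auto simp: np_gen_mem)

lemma np_halfspace:
  fixes c0 c1 c2 :: real
  assumes c1: "c1 \<ge> 0" and c2: "c2 \<ge> 0"
    and A: "\<And>i j. b i j \<noteq> 0 \<Longrightarrow> c0 + c1 * real i + c2 * real j \<ge> 0"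
    and u: "u \<in> newton_polygon b"
  shows "c0 + c1 * fst u + c2 * snd u \<ge> 0"
proof -
  have "newton_polygon b \<subseteq> {u. c0 + c1 * fst u + c2 * snd u \<ge> 0}"
    unfolding np_eq
  proof (rule hull_minimal)
    show "np_gen b \<subseteq> {u. c0 + c1 * fst u + c2 * snd u \<ge> 0}"
    proof
      fix xy assume "xy \<in> np_gen b"
      then obtain i j where ij: "b i j \<noteq> 0" "fst xy \<ge> real i" "snd xy \<ge> real j"
        unfolding np_gen_mem by blast
      have "c1 * real i \<le> c1 * fst xy" using ij c1 by (simp add: mult_left_mono)
      moreover have "c2 * real j \<le> c2 * snd xy" using ij c2 by (simp add: mult_left_mono)
      ultimately show "xy \<in> {u. c0 + c1 * fst u + c2 * snd u \<ge> 0}" using A[OF ij(1)] by simp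
    qed
    show "convex {u. c0 + c1 * fst u + c2 * snd u \<ge> 0}"
      unfolding convex_def
    proof (intro ballI allI impI)
      fix x y :: "real \<times> real" and s t :: real
      assume x: "x \<in> {u. c0 + c1 * fst u + c2 * snd u \<ge> 0}" and y: "y \<in> {u. c0 + c1 * fst u + c2 * snd u \<ge> 0}"
        and st: "0 \<le> s" "0 \<le> t" "s + t = 1"
      have eq: "c0 + c1 * fst (s *\<^sub>R x + t *\<^sub>R y) + c2 * snd (s *\<^sub>R x + t *\<^sub>R y)
          = s * (c0 + c1 * fst x + c2 * snd x) + t * (c0 + c1 * fst y + c2 * snd y)"
      proof -
        have "c0 = (s + t) * c0" using st(3) by simp
        then show ?thesis by (simp add: algebra_simps)
      qed
      have "s * (c0 + c1 * fst x + c2 * snd x) \<ge> 0" "t * (c0 + c1 * fst y + c2 * snd y) \<ge> 0"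
        using x y st by simp_all
      then show "s *\<^sub>R x + t *\<^sub>R y \<in> {u. c0 + c1 * fst u + c2 * snd u \<ge> 0}"
        unfolding mem_Collect_eq eq by linarith
    qed
  qed
  with u show ?thesis by (simp add: subset_iff)
qed

lemma np_up:
  assumes u: "u \<in> newton_polygon b" and a12: "a1 \<ge> 0" "a2 \<ge> 0"
  shows "u + (a1, a2) \<in> newton_polygon b"
proof -
  have sub: "(\<lambda>x. (a1, a2) + x) ` np_gen b \<subseteq> np_gen b"
  proof
    fix y assume "y \<in> (\<lambda>x. (a1, a2) + x) ` np_gen b"
    then obtain x where x: "x \<in> np_gen b" "y = (a1, a2) + x" by (rule imageE)
    then obtain i j where ij: "b i j \<noteq> 0" "fst x \<ge> real i" "snd x \<ge> real j"
      unfolding np_gen_mem by blast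
    have "fst y \<ge> real i" "snd y \<ge> real j" using x(2) ij a12 by simp_all
    then show "y \<in> np_gen b" unfolding np_gen_mem using ij(1) by blast
  qed
  have "(a1, a2) + u \<in> (\<lambda>x. (a1, a2) + x) ` (convex hull np_gen b)"
    using u unfolding np_eq by (rule imageI)
  also have "\<dots> = convex hull ((\<lambda>x. (a1, a2) + x) ` np_gen b)" by (rule convex_hull_translation[symmetric])
  also have "\<dots> \<subseteq> convex hull np_gen b" by (rule hull_mono[OF sub])
  finally show ?thesis unfolding np_eq by (simp add: add.commute)
qed

lemma np_fst_nonneg: "u \<in> newton_polygon b \<Longrightarrow> fst u \<ge> 0"
  using np_halfspace[of 1 0 b 0 u] by simp

lemma np_snd_nonneg: "u \<in> newton_polygon b \<Longrightarrow> snd u \<ge> 0"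
  using np_halfspace[of 0 1 b 0 u] by simp


lemma finite_pos_gap:
  fixes f :: "'a \<Rightarrow> real"
  assumes "finite S"
  shows "\<exists>g>0. \<forall>x\<in>S. f x > 0 \<longrightarrow> f x \<ge> g"
  using assms
proof (induction S rule: finite_induct)
  case empty then show ?case by (intro exI[of _ 1]) auto
next
  case (insert y S)
  then obtain g where g: "g > 0" "\<forall>x\<in>S. f x > 0 \<longrightarrow> f x \<ge> g" by blast
  show ?case
  proof (cases "f y > 0")
    case True
    then show ?thesis using g by (intro exI[of _ "min g (f y)"]) auto
  next
    case False
    then show ?thesis using g by (intro exI[of _ g]) auto
  qed
qed

lemma open_segment_zero_comb:
  fixes A C u :: real
  assumes "A \<ge> 0" "C \<ge> 0" "0 < u" "u < 1" "(1 - u) * A + u * C = 0"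
  shows "A = 0 \<and> C = 0"
proof -
  have "(1 - u) * A \<ge> 0" "u * C \<ge> 0" using assms by auto
  then have "(1 - u) * A = 0" "u * C = 0" using assms(5) by linarith+
  then show ?thesis using assms(3,4) by auto
qed

lemma np_min_extreme:
  fixes \<alpha> \<beta> :: real
  assumes a: "\<alpha> > 0" and bpos: "\<beta> > 0" and supp: "b i0 j0 \<noteq> 0"
  shows "\<exists>v. v extreme_point_of newton_polygon b \<and>
             \<alpha> * fst v + \<beta> * snd v \<le> \<alpha> * real i0 + \<beta> * real j0"
proof -
  define P where "P = newton_polygon b"
  define f where "f = (\<lambda>(i::nat, j::nat). \<alpha> * real i + \<beta> * real j)"
  define \<Phi>0 where "\<Phi>0 = \<alpha> * real i0 + \<beta> * real j0"
  define S0 where "S0 = {(i, j). b i j \<noteq> 0 \<and> f (i, j) \<le> \<Phi>0 + 1}"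
  have fin: "finite S0"
  proof (rule finite_subset)
    show "S0 \<subseteq> {..nat \<lceil>(\<Phi>0 + 1) / \<alpha>\<rceil>} \<times> {..nat \<lceil>(\<Phi>0 + 1) / \<beta>\<rceil>}"
    proof
      fix x assume "x \<in> S0"
      then obtain i j where x: "x = (i, j)" "\<alpha> * real i + \<beta> * real j \<le> \<Phi>0 + 1"
        unfolding S0_def f_def by auto
      have "\<alpha> * real i \<le> \<Phi>0 + 1" "\<beta> * real j \<le> \<Phi>0 + 1" using x(2) a bpos by (smt (verit) mult_nonneg_nonneg of_nat_0_le_iff)+
      then have "real i \<le> (\<Phi>0 + 1) / \<alpha>" "real j \<le> (\<Phi>0 + 1) / \<beta>"
        using a bpos by (simp_all add: pos_le_divide_eq mult.commute)
      then have "i \<le> nat \<lceil>(\<Phi>0 + 1) / \<alpha>\<rceil>" "j \<le> nat \<lceil>(\<Phi>0 + 1) / \<beta>\<rceil>"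
        by linarith+
      then show "x \<in> {..nat \<lceil>(\<Phi>0 + 1) / \<alpha>\<rceil>} \<times> {..nat \<lceil>(\<Phi>0 + 1) / \<beta>\<rceil>}" using x by auto
    qed
  qed simp
  have i0S: "(i0, j0) \<in> S0" unfolding S0_def f_def \<Phi>0_def using supp by auto
  define \<mu> where "\<mu> = Min (f ` S0)"
  have mu_le: "\<And>x. x \<in> S0 \<Longrightarrow> \<mu> \<le> f x" unfolding \<mu>_def using fin by auto
  have "\<mu> \<in> f ` S0" unfolding \<mu>_def using fin i0S by (intro Min_in) auto
  then obtain e0 where e0: "e0 \<in> S0" "f e0 = \<mu>" by auto
  define S\<mu> where "S\<mu> = {x\<in>S0. f x = \<mu>}"
  have finmu: "finite S\<mu>" using fin unfolding S\<mu>_def by auto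
  have e0mu: "e0 \<in> S\<mu>" using e0 unfolding S\<mu>_def by auto
  define xmin where "xmin = Min (fst ` S\<mu>)"
  have xmin_le: "\<And>x. x \<in> S\<mu> \<Longrightarrow> xmin \<le> fst x" unfolding xmin_def using finmu by auto
  have "xmin \<in> fst ` S\<mu>" unfolding xmin_def using finmu e0mu by (intro Min_in) auto
  then obtain e where e: "e \<in> S\<mu>" "fst e = xmin" by auto
  have mu_le_Phi0: "\<mu> \<le> \<Phi>0" using mu_le[OF i0S] unfolding f_def \<Phi>0_def by simp
  have supp_ge: "f (i, j) \<ge> \<mu>" if "b i j \<noteq> 0" for i j
  proof (cases "(i, j) \<in> S0")
    case True then show ?thesis using mu_le by auto
  next
    case False then have "f (i, j) > \<Phi>0 + 1" using that unfolding S0_def by auto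
    then show ?thesis using mu_le_Phi0 by linarith
  qed
  obtain g where g: "g > 0" "\<forall>x\<in>S0. f x - \<mu> > 0 \<longrightarrow> f x - \<mu> \<ge> g"
    using finite_pos_gap[OF fin, of "\<lambda>x. f x - \<mu>"] by blast
  define g1 where "g1 = min g 1"
  have g1: "g1 > 0" using g unfolding g1_def by auto
  have gap: "f (i, j) \<ge> \<mu> + g1" if "b i j \<noteq> 0" "f (i, j) > \<mu>" for i j
  proof (cases "(i, j) \<in> S0")
    case True then show ?thesis using g that unfolding g1_def by force
  next
    case False then have "f (i, j) > \<Phi>0 + 1" using that unfolding S0_def by auto
    then show ?thesis using mu_le_Phi0 unfolding g1_def by linarith
  qed
  define K where "K = real xmin / g1"
  have K: "K \<ge> 0" "K * g1 = real xmin" unfolding K_def using g1 by auto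
  have P_ge: "\<alpha> * fst u + \<beta> * snd u \<ge> \<mu>" if "u \<in> P" for u
  proof -
    have "0 \<le> - \<mu> + \<alpha> * fst u + \<beta> * snd u"
    proof (rule np_halfspace[of _ _ b])
      fix i j assume "b i j \<noteq> 0"
      then show "0 \<le> - \<mu> + \<alpha> * real i + \<beta> * real j" using supp_ge unfolding f_def by force
    qed (use a bpos that P_def in auto)
    then show ?thesis by simp
  qed
  have P_x: "fst u \<ge> real xmin" if "u \<in> P" "\<alpha> * fst u + \<beta> * snd u = \<mu>" for u
  proof -
    have "(- K * \<mu> - real xmin) + (K * \<alpha> + 1) * fst u + (K * \<beta>) * snd u \<ge> 0"
    proof (rule np_halfspace[of _ _ b])
      show "0 \<le> K * \<alpha> + 1" using K a by auto
      show "0 \<le> K * \<beta>" using K bpos by auto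
      show "u \<in> newton_polygon b" using that P_def by auto
      fix i j assume ij: "b i j \<noteq> 0"
      have eq: "- K * \<mu> - real xmin + (K * \<alpha> + 1) * real i + K * \<beta> * real j
          = K * (f (i, j) - \<mu>) + real i - real xmin" unfolding f_def by (simp add: algebra_simps)
      show "0 \<le> - K * \<mu> - real xmin + (K * \<alpha> + 1) * real i + K * \<beta> * real j"
      proof (cases "f (i, j) = \<mu>")
        case True
        then have "(i, j) \<in> S\<mu>" unfolding S\<mu>_def S0_def using ij mu_le_Phi0 by auto
        then have "xmin \<le> i" using xmin_le by force
        then show ?thesis unfolding eq using True by simp
      next
        case False
        then have "f (i, j) \<ge> \<mu> + g1" using gap[OF ij] supp_ge[OF ij] by linarith
        then have "K * (f (i, j) - \<mu>) \<ge> K * g1" using K by (intro mult_left_mono) auto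
        then show ?thesis unfolding eq using K by simp
      qed
    qed
    then have "K * (\<alpha> * fst u + \<beta> * snd u - \<mu>) + fst u - real xmin \<ge> 0"
      by (simp add: algebra_simps)
    then show ?thesis using that(2) by simp
  qed
  obtain ei ej where eij: "e = (ei, ej)" by fastforce
  have e_supp: "b ei ej \<noteq> 0" and e_f: "f (ei, ej) = \<mu>" using e eij unfolding S\<mu>_def S0_def by auto
  define v where "v = (real ei, real ej)"
  have vP: "v \<in> P" unfolding v_def P_def using np_support[of b ei ej, OF e_supp] .
  have v_phi: "\<alpha> * fst v + \<beta> * snd v = \<mu>" using e_f unfolding v_def f_def by simp
  have v_x: "fst v = real xmin" using e eij unfolding v_def by auto
  have "v extreme_point_of P"
    unfolding extreme_point_of_def
  proof (intro conjI vP ballI notI)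
    fix p c assume pP: "p \<in> P" and cP: "c \<in> P" and vs: "v \<in> open_segment p c"
    then obtain u where u: "p \<noteq> c" "0 < u" "u < 1" "v = (1 - u) *\<^sub>R p + u *\<^sub>R c"
      unfolding in_segment by blast
    have fv: "fst v = (1 - u) * fst p + u * fst c" and sv: "snd v = (1 - u) * snd p + u * snd c"
      using u(4) by simp_all
    have "(1 - u) * (\<alpha> * fst p + \<beta> * snd p - \<mu>) + u * (\<alpha> * fst c + \<beta> * snd c - \<mu>)
         = \<alpha> * fst v + \<beta> * snd v - \<mu>" unfolding fv sv by (simp add: algebra_simps)
    also have "\<dots> = 0" using v_phi by simp
    finally have "\<alpha> * fst p + \<beta> * snd p - \<mu> = 0 \<and> \<alpha> * fst c + \<beta> * snd c - \<mu> = 0"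
      using P_ge[OF pP] P_ge[OF cP] u by (intro open_segment_zero_comb) auto
    then have pm: "\<alpha> * fst p + \<beta> * snd p = \<mu>" and cm: "\<alpha> * fst c + \<beta> * snd c = \<mu>" by auto
    have "(1 - u) * (fst p - real xmin) + u * (fst c - real xmin) = fst v - real xmin"
      unfolding fv by (simp add: algebra_simps)
    also have "\<dots> = 0" using v_x by simp
    finally have "fst p - real xmin = 0 \<and> fst c - real xmin = 0"
      using P_x[OF pP pm] P_x[OF cP cm] u by (intro open_segment_zero_comb) auto
    then have fpc: "fst p = fst c" by simp
    then have "\<beta> * snd p = \<beta> * snd c" using pm cm by (metis add_left_cancel)
    then have "snd p = snd c" using bpos by simp
    then have "p = c" using fpc by (simp add: prod_eq_iff)
    then show False using u(1) by simp
  qed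
  moreover have "\<alpha> * fst v + \<beta> * snd v \<le> \<alpha> * real i0 + \<beta> * real j0"
    using v_phi mu_le_Phi0 unfolding \<Phi>0_def by simp
  ultimately show ?thesis unfolding P_def by blast
qed


lemma np_G:
  fixes n m :: "nat \<Rightarrow> nat"
  assumes vertices: "{v. v extreme_point_of newton_polygon b} =
                   (\<lambda>k. (real (n k), real (m k))) ` {1..s}"
    and n_incr: "\<forall>i\<in>{1..s}. \<forall>j\<in>{1..s}. i < j \<longrightarrow> n i < n j"
    and m_decr: "\<forall>i\<in>{1..s}. \<forall>j\<in>{1..s}. i < j \<longrightarrow> m j < m i"
    and s_gt: "s > 1"
    and supp: "b i j \<noteq> 0"
  shows "real (m s) \<le> real j"
    and "(real (m (s - 1)) - real (m s)) * real i + (real (n s) - real (n (s - 1))) * real j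
         \<ge> real (n s) * real (m (s - 1)) - real (m s) * real (n (s - 1))"
proof -
  define P where "P = newton_polygon b"
  have ext_iff: "v extreme_point_of P \<longleftrightarrow> (\<exists>k\<in>{1..s}. v = (real (n k), real (m k)))" for v
  proof -
    have "v extreme_point_of P \<longleftrightarrow> v \<in> {v. v extreme_point_of newton_polygon b}" unfolding P_def by simp
    also have "\<dots> \<longleftrightarrow> v \<in> (\<lambda>k. (real (n k), real (m k))) ` {1..s}" unfolding vertices ..
    finally show ?thesis by blast
  qed
  have convP: "convex P" unfolding P_def np_eq by (rule convex_convex_hull)
  show G1: "real (m s) \<le> real j"
  proof (rule ccontr)
    assume "\<not> real (m s) \<le> real j"
    then have jl: "real j + 1 \<le> real (m s)" by simp
    define B where "B = real (n s) + real i + 1"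
    have Bpos: "B > 0" unfolding B_def by simp
    obtain v where v: "v extreme_point_of P" "1 * fst v + B * snd v \<le> 1 * real i + B * real j"
      using np_min_extreme[of 1 B b i j] Bpos supp unfolding P_def by auto
    then obtain k where k: "k \<in> {1..s}" "v = (real (n k), real (m k))" using ext_iff by blast
    have le: "real (n k) + B * real (m k) \<le> real i + B * real j" using v(2) k(2) by simp
    show False
    proof (cases "k = s")
      case True
      have "B * real j + B \<le> B * real (m s)" using jl Bpos
        by (metis distrib_left mult.right_neutral mult_left_mono less_imp_le)
      then show False using le True unfolding B_def by simp
    next
      case False
      then have "k < s" using k by auto
      then have "m s < m k" using m_decr k s_gt by auto
      then have "real j + 2 \<le> real (m k)" using jl by linarith
      then have "B * (real j + 2) \<le> B * real (m k)" using Bpos by (intro mult_left_mono) auto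
      then show False using le unfolding B_def by (simp add: algebra_simps)
    qed
  qed
  define \<gamma> where "\<gamma> = real (n s)"
  define d where "d = real (m s)"
  define n' where "n' = real (n (s - 1))"
  define m' where "m' = real (m (s - 1))"
  have s1: "s - 1 \<in> {1..s}" "s \<in> {1..s}" "s - 1 < s" using s_gt by auto
  have nlt: "n' < \<gamma>" unfolding n'_def \<gamma>_def using n_incr s1 by auto
  have mgt: "d < m'" unfolding m'_def d_def using m_decr s1 by auto
  define \<psi> where "\<psi> = (\<lambda>x::real\<times>real. (m' - d) * fst x + (\<gamma> - n') * snd x)"
  define \<Lambda> where "\<Lambda> = \<gamma> * m' - d * n'"
  show "(real (m (s - 1)) - real (m s)) * real i + (real (n s) - real (n (s - 1))) * real j
         \<ge> real (n s) * real (m (s - 1)) - real (m s) * real (n (s - 1))"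
  proof (rule ccontr)
    assume "\<not> ?thesis"
    then have lt: "\<psi> (real i, real j) < \<Lambda>"
      unfolding \<psi>_def \<Lambda>_def \<gamma>_def d_def n'_def m'_def by simp
    obtain v where v: "v extreme_point_of P" "(m' - d) * fst v + (\<gamma> - n') * snd v \<le> (m' - d) * real i + (\<gamma> - n') * real j"
      using np_min_extreme[of "m' - d" "\<gamma> - n'" b i j] nlt mgt supp unfolding P_def by auto
    then obtain k where k: "k \<in> {1..s}" "v = (real (n k), real (m k))" using ext_iff by blast
    have vlt: "\<psi> v < \<Lambda>" using v(2) lt unfolding \<psi>_def by simp
    have ks: "k \<noteq> s"
    proof
      assume "k = s"
      then have "\<psi> v = \<Lambda>" using k unfolding \<psi>_def \<Lambda>_def \<gamma>_def d_def by (simp add: algebra_simps)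
      then show False using vlt by simp
    qed
    have ks1: "k \<noteq> s - 1"
    proof
      assume "k = s - 1"
      then have "\<psi> v = \<Lambda>" using k unfolding \<psi>_def \<Lambda>_def n'_def m'_def by (simp add: algebra_simps)
      then show False using vlt by simp
    qed
    then have kl: "k < s - 1" using k ks by auto
    define nk where "nk = real (n k)"
    define mk where "mk = real (m k)"
    have nk: "nk < n'" unfolding nk_def n'_def using n_incr k kl s1 by auto
    have mk: "m' < mk" unfolding mk_def m'_def using m_decr k kl s1 by auto
    define t where "t = (n' - nk) / (\<gamma> - nk)"
    have t: "0 < t" "t < 1" unfolding t_def using nk nlt by (auto simp: divide_simps)
    have tt: "t * (\<gamma> - nk) = n' - nk" unfolding t_def using nk nlt by auto
    define pt where "pt = (1 - t) *\<^sub>R (nk, mk) + t *\<^sub>R (\<gamma>, d)"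
    have vkP: "(nk, mk) \<in> P" using v k unfolding extreme_point_of_def nk_def mk_def by simp
    have vsP: "(\<gamma>, d) \<in> P" using ext_iff[of "(\<gamma>, d)"] s1 unfolding \<gamma>_def d_def extreme_point_of_def by blast
    have ptP: "pt \<in> P" unfolding pt_def using convexD[OF convP vkP vsP] t by auto
    have fpt: "fst pt = n'" unfolding pt_def using tt by (simp add: algebra_simps)
    have psi_pt: "\<psi> pt = (1 - t) * \<psi> (nk, mk) + t * \<psi> (\<gamma>, d)"
      unfolding pt_def \<psi>_def by (simp add: algebra_simps)
    have psi_s: "\<psi> (\<gamma>, d) = \<Lambda>" unfolding \<psi>_def \<Lambda>_def by (simp add: algebra_simps)
    have "\<psi> (nk, mk) < \<Lambda>" using vlt k unfolding nk_def mk_def by simp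
    then have "(1 - t) * \<psi> (nk, mk) < (1 - t) * \<Lambda>" using t by simp
    then have "\<psi> pt < \<Lambda>" using psi_pt psi_s by (simp add: algebra_simps)
    then have "(\<gamma> - n') * snd pt < (\<gamma> - n') * m'"
      unfolding \<psi>_def \<Lambda>_def fpt by (simp add: algebra_simps)
    then have ypt: "snd pt < m'" using nlt by simp
    define h where "h = m' - snd pt"
    have h: "h > 0" unfolding h_def using ypt by simp
    define pt2 where "pt2 = pt + (0, 2 * h)"
    have pt2P: "pt2 \<in> P" unfolding pt2_def P_def using np_up[of pt b 0 "2 * h"] ptP h P_def by simp
    have "(n', m') \<in> open_segment pt pt2"
      unfolding in_segment
    proof (intro conjI exI[of _ "1/2"])
      show "pt \<noteq> pt2" unfolding pt2_def using h by (simp add: prod_eq_iff)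
      show "(n', m') = (1 - 1 / 2) *\<^sub>R pt + (1 / 2) *\<^sub>R pt2"
        unfolding pt2_def using fpt h_def by (simp add: prod_eq_iff algebra_simps)
    qed auto
    moreover have "(n', m') extreme_point_of P" using ext_iff[of "(n', m')"] s1 unfolding n'_def m'_def by blast
    ultimately show False using ptP pt2P unfolding extreme_point_of_def by blast
  qed
qed



lemma expo:
  fixes l \<delta> \<gamma> d n' m' i j :: real
  assumes nlt: "n' < \<gamma>" and n0: "0 \<le> n'" and mgt: "d < m'"
    and case2: "\<delta> \<le> m' - n' * (d - m') / (\<gamma> - n')"
    and lpos: "l > 0" and key: "l * \<delta> < \<gamma> + l * d"
    and G1: "d \<le> j" and G2: "(m' - d) * i + (\<gamma> - n') * j \<ge> \<gamma> * m' - d * n'"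
    and i0: "0 \<le> i"
  shows "i + l * j \<ge> l * \<delta> \<and> (i + l * j = l * \<delta> \<longrightarrow> i = 0 \<and> j = \<delta>)"
proof -
  define \<alpha> where "\<alpha> = m' - d"
  define \<beta> where "\<beta> = \<gamma> - n'"
  define \<Lambda> where "\<Lambda> = \<gamma> * m' - d * n'"
  have a: "\<alpha> > 0" and bb: "\<beta> > 0" using nlt mgt unfolding \<alpha>_def \<beta>_def by auto
  have G2': "\<alpha> * i + \<beta> * j \<ge> \<Lambda>" using G2 unfolding \<alpha>_def \<beta>_def \<Lambda>_def .
  have T: "m' - n' * (d - m') / (\<gamma> - n') = \<Lambda> / \<beta>"
    unfolding \<Lambda>_def \<beta>_def using nlt by (simp add: field_simps)
  have dL: "\<delta> * \<beta> \<le> \<Lambda>" using case2 T bb by (simp add: pos_le_divide_eq)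
  have corner: "\<alpha> * \<gamma> + \<beta> * d = \<Lambda>" unfolding \<alpha>_def \<beta>_def \<Lambda>_def by (simp add: algebra_simps)
  show ?thesis
  proof (cases "l * \<alpha> \<le> \<beta>")
    case True
    have "l * \<delta> * \<beta> \<le> l * \<Lambda>" using dL lpos by (simp add: mult.assoc)
    also have "l * \<Lambda> \<le> l * (\<alpha> * i + \<beta> * j)" using G2' lpos by simp
    also have "l * (\<alpha> * i + \<beta> * j) = (l * \<alpha>) * i + \<beta> * (l * j)" by (simp add: algebra_simps)
    also have "(l * \<alpha>) * i \<le> \<beta> * i" using True i0 by (simp add: mult_right_mono)
    finally have main: "l * \<delta> * \<beta> \<le> \<beta> * (i + l * j)" by (simp add: algebra_simps)
    then have ge: "l * \<delta> \<le> i + l * j" using bb by (simp add: mult.commute)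
    show ?thesis
    proof (rule conjI[OF ge], rule impI)
      assume eq: "i + l * j = l * \<delta>"
      have c1: "(l * \<alpha>) * i \<le> \<beta> * i" using True i0 by (simp add: mult_right_mono)
      have c2: "l * \<Lambda> \<le> l * (\<alpha> * i + \<beta> * j)" using G2' lpos by simp
      have c3: "l * \<delta> * \<beta> \<le> l * \<Lambda>" using dL lpos by (simp add: mult.assoc)
      have c4: "\<beta> * (i + l * j) = l * \<delta> * \<beta>" using eq by simp
      have c2': "l * \<Lambda> \<le> l * \<alpha> * i + l * \<beta> * j" using c2 by (simp add: algebra_simps)
      have c4': "\<beta> * i + l * \<beta> * j = l * \<delta> * \<beta>" using c4 by (simp add: algebra_simps)
      have e1: "(l * \<alpha>) * i = \<beta> * i" and e2': "l * \<Lambda> = l * \<alpha> * i + l * \<beta> * j"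
        and e3: "l * \<delta> * \<beta> = l * \<Lambda>"
        using c1 c2' c3 c4' by linarith+
      have e2: "l * \<Lambda> = l * (\<alpha> * i + \<beta> * j)" using e2' by (simp add: algebra_simps)
      show "i = 0 \<and> j = \<delta>"
      proof (cases "l * \<alpha> < \<beta>")
        case True
        have "(\<beta> - l * \<alpha>) * i = 0" by (simp add: left_diff_distrib e1)
        moreover have "\<beta> - l * \<alpha> \<noteq> 0" using True by simp
        ultimately have i00: "i = 0" by simp
        then have "\<beta> * j = \<Lambda>" using e2 lpos by simp
        moreover have "\<delta> * \<beta> = \<Lambda>" using e3 lpos by (simp add: mult.assoc)
        ultimately have "\<beta> * j = \<beta> * \<delta>" by (simp add: mult.commute)
        then show ?thesis using i00 bb by simp
      next
        case False
        then have la: "l * \<alpha> = \<beta>" using \<open>l * \<alpha> \<le> \<beta>\<close> by simp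
        have "\<beta> * (\<gamma> + l * d) = l * \<Lambda>" unfolding corner[symmetric] using la
          by (simp add: algebra_simps)
        also have "\<dots> \<le> \<beta> * i + l * \<beta> * j" using c2' e1 by linarith
        also have "\<dots> = \<beta> * (i + l * j)" by (simp add: algebra_simps)
        finally have "\<gamma> + l * d \<le> i + l * j" using bb by simp
        then show ?thesis using key eq by simp
      qed
    qed
  next
    case False
    have "\<Lambda> + (l * \<alpha> - \<beta>) * d \<le> (\<alpha> * i + \<beta> * j) + (l * \<alpha> - \<beta>) * j"
      using G2' G1 False by (intro add_mono mult_left_mono) auto
    then have "\<alpha> * (\<gamma> + l * d) \<le> \<alpha> * (i + l * j)" using corner by (simp add: algebra_simps)
    then have "\<gamma> + l * d \<le> i + l * j" using a by simp
    then show ?thesis using key by simp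
  qed
qed



lemma term_bound:
  fixes t u r1 r2 \<rho> l \<eta> :: real and i j M \<delta> :: nat
  assumes t: "0 < t" "t < r1" and r1: "r1 \<le> \<rho>" and \<rho>: "\<rho> \<le> 1"
    and u: "0 \<le> u" "u \<le> r2 * t powr l" and r2: "0 < r2" "r2 \<le> \<rho>" and l: "l > 0"
    and M: "real M \<ge> l * real \<delta> + 1" and \<eta>: "\<eta> > 0"
    and ex1: "real i + l * real j \<ge> l * real \<delta>"
    and ex2: "j < \<delta> \<Longrightarrow> i < M \<Longrightarrow> real i + l * real j \<ge> l * real \<delta> + \<eta>"
  shows "t ^ i * u ^ j * \<rho> ^ (M + \<delta>) \<le> \<rho> ^ (i + j) * ((r2 ^ \<delta> + r1 + r1 powr \<eta>) * t powr (l * real \<delta>))"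
proof -
  define T where "T = t powr (l * real \<delta>)"
  define E where "E = r2 ^ \<delta> + r1 + r1 powr \<eta>"
  have T0: "T > 0" unfolding T_def using t by simp
  have r1pos: "r1 > 0" using t by simp
  have \<rho>pos: "\<rho> > 0" using t r1 by simp
  have t1: "t \<le> 1" using t r1 \<rho> by simp
  have tl1: "t powr l \<le> 1" using t1 t l by (intro powr_le1) auto
  have u\<rho>: "u \<le> \<rho>"
  proof -
    have "r2 * t powr l \<le> r2 * 1" using tl1 r2 by (intro mult_left_mono) auto
    then show ?thesis using u r2 by linarith
  qed
  have t\<rho>: "t \<le> \<rho>" using t r1 by simp
  have E0: "r2 ^ \<delta> \<le> E" "r1 \<le> E" "r1 powr \<eta> \<le> E" unfolding E_def using r2 r1pos by auto
  have Egt: "E \<ge> 0" using E0 r1pos by linarith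
  have \<rho>mono: "\<rho> ^ a \<le> \<rho> ^ b" if "b \<le> a" for a b :: nat
    using \<rho> \<rho>pos that by (simp add: power_decreasing)
  have main: "t ^ i * u ^ j * \<rho> ^ (M + \<delta>) \<le> \<rho> ^ (i + j) * (E * T)"
  proof (cases "\<delta> \<le> j")
    case True
    have "u ^ \<delta> \<le> (r2 * t powr l) ^ \<delta>" using u by (intro power_mono) auto
    also have "\<dots> = r2 ^ \<delta> * T" unfolding T_def power_mult_distrib
      using t by (simp add: powr_power mult.commute)
    finally have u1: "u ^ \<delta> \<le> r2 ^ \<delta> * T" .
    have u2: "u ^ (j - \<delta>) \<le> \<rho> ^ (j - \<delta>)" using u u\<rho> by (intro power_mono) auto
    have ti: "t ^ i \<le> \<rho> ^ i" using t t\<rho> by (intro power_mono) auto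
    have "t ^ i * u ^ j = t ^ i * (u ^ \<delta> * u ^ (j - \<delta>))"
      using True by (simp add: power_add[symmetric])
    also have "\<dots> \<le> \<rho> ^ i * ((r2 ^ \<delta> * T) * \<rho> ^ (j - \<delta>))"
      using ti u1 u2 u T0 t r2 \<rho>pos by (intro mult_mono) auto
    finally have "t ^ i * u ^ j * \<rho> ^ (M + \<delta>) \<le> \<rho> ^ i * ((r2 ^ \<delta> * T) * \<rho> ^ (j - \<delta>)) * \<rho> ^ (M + \<delta>)"
      using \<rho>pos by (intro mult_right_mono) auto
    also have "\<dots> = \<rho> ^ (i + j + M) * (r2 ^ \<delta> * T)"
      using True by (simp add: power_add[symmetric] algebra_simps)
    also have "\<dots> \<le> \<rho> ^ (i + j) * (E * T)"
      using \<rho>mono[of "i + j" "i + j + M"] E0(1) Egt T0 \<rho>pos r2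
      by (intro mult_mono) auto
    finally show ?thesis .
  next
    case False
    then have jd: "j < \<delta>" by simp
    have uj: "u ^ j \<le> \<rho> ^ j" using u u\<rho> by (intro power_mono) auto
    show ?thesis
    proof (cases "M \<le> i")
      case True
      have tM: "t ^ M \<le> r1 * T"
      proof -
        have "t ^ M = t powr (real M)" using t by (simp add: powr_realpow)
        also have "\<dots> \<le> t powr (l * real \<delta> + 1)" using M t t1 by (intro powr_mono') auto
        also have "\<dots> = T * t" unfolding T_def using t by (simp add: powr_add)
        also have "\<dots> \<le> T * r1" using T0 t by simp
        finally show ?thesis by (simp add: mult.commute)
      qed
      have tiM: "t ^ (i - M) \<le> \<rho> ^ (i - M)" using t t\<rho> by (intro power_mono) auto
      have "t ^ i * u ^ j = t ^ M * t ^ (i - M) * u ^ j"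
        using True by (simp add: power_add[symmetric])
      also have "\<dots> \<le> (r1 * T) * \<rho> ^ (i - M) * \<rho> ^ j"
        using tM tiM uj t u r1pos T0 \<rho>pos by (intro mult_mono) auto
      finally have "t ^ i * u ^ j * \<rho> ^ (M + \<delta>) \<le> (r1 * T) * \<rho> ^ (i - M) * \<rho> ^ j * \<rho> ^ (M + \<delta>)"
        using \<rho>pos by (intro mult_right_mono) auto
      also have "\<dots> = \<rho> ^ (i + j + \<delta>) * (r1 * T)"
        using True by (simp add: power_add[symmetric] algebra_simps)
      also have "\<dots> \<le> \<rho> ^ (i + j) * (E * T)"
        using \<rho>mono[of "i + j" "i + j + \<delta>"] E0(2) Egt T0 \<rho>pos r1pos
        by (intro mult_mono) auto
      finally show ?thesis .
    next
      case False
      then have iM: "i < M" by simp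
      have "u ^ j \<le> (r2 * t powr l) ^ j" using u by (intro power_mono) auto
      also have "\<dots> = r2 ^ j * t powr (l * real j)" unfolding power_mult_distrib
        using t by (simp add: powr_power mult.commute)
      also have "\<dots> \<le> 1 * t powr (l * real j)"
        using r2 r1 \<rho> by (intro mult_right_mono) (auto intro: power_le_one)
      finally have uj2: "u ^ j \<le> t powr (l * real j)" by simp
      have "t ^ i * u ^ j \<le> t ^ i * t powr (l * real j)" using uj2 t by (intro mult_left_mono) auto
      also have "\<dots> = t powr (real i + l * real j)" using t by (simp add: powr_add powr_realpow)
      also have "\<dots> \<le> t powr (l * real \<delta> + \<eta>)" using ex2[OF jd iM] t t1 by (intro powr_mono') auto
      also have "\<dots> = T * t powr \<eta>" unfolding T_def using t by (simp add: powr_add)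
      also have "\<dots> \<le> T * r1 powr \<eta>" using T0 t \<eta> by (intro mult_left_mono powr_mono2) auto
      finally have a1: "t ^ i * u ^ j \<le> T * r1 powr \<eta>" .
      have "t ^ i * u ^ j * \<rho> ^ (M + \<delta>) \<le> (T * r1 powr \<eta>) * \<rho> ^ (i + j)"
      proof (rule mult_mono[OF a1])
        show "\<rho> ^ (M + \<delta>) \<le> \<rho> ^ (i + j)" using iM jd by (intro \<rho>mono) auto
      qed (use \<rho>pos T0 r1pos in auto)
      also have "\<dots> \<le> \<rho> ^ (i + j) * (E * T)"
        using E0(3) Egt T0 \<rho>pos by (simp add: mult.commute mult_left_mono)
      finally show ?thesis .
    qed
  qed
  then show ?thesis unfolding E_def T_def .
qed



lemma q_bound:
  fixes b :: "nat \<Rightarrow> nat \<Rightarrow> complex" and z w Q :: complex and \<rho> Kc :: real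
  assumes hs: "((\<lambda>(i, j). b i j * z ^ i * w ^ j) has_sum Q) UNIV"
    and gs: "(\<lambda>(i, j). norm (b i j) * \<rho> ^ (i + j)) summable_on UNIV"
    and tb: "\<And>i j. b i j \<noteq> 0 \<Longrightarrow> norm z ^ i * norm w ^ j \<le> Kc * \<rho> ^ (i + j)"
    and Kc: "Kc \<ge> 0"
  shows "norm Q \<le> Kc * infsum (\<lambda>(i, j). norm (b i j) * \<rho> ^ (i + j)) UNIV"
proof -
  define F where "F = (\<lambda>(i, j). b i j * z ^ i * w ^ j)"
  define G where "G = (\<lambda>(i::nat, j::nat). norm (b i j) * \<rho> ^ (i + j))"
  have nb: "norm (F x) \<le> Kc * G x" for x
  proof -
    obtain i j where x: "x = (i, j)" by fastforce
    show ?thesis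
    proof (cases "b i j = 0")
      case True then show ?thesis unfolding x F_def G_def by simp
    next
      case False
      have "norm (F x) = norm (b i j) * (norm z ^ i * norm w ^ j)"
        unfolding x F_def by (simp add: norm_mult norm_power)
      also have "\<dots> \<le> norm (b i j) * (Kc * \<rho> ^ (i + j))"
        using tb[OF False] by (intro mult_left_mono) auto
      also have "\<dots> = Kc * G x" unfolding x G_def by simp
      finally show ?thesis .
    qed
  qed
  have gs': "G summable_on UNIV" using gs unfolding G_def .
  have sumN: "(\<lambda>x. norm (F x)) summable_on UNIV"
    by (rule summable_on_comparison_test[OF summable_on_cmult_right[OF gs', of Kc]]) (use nb in auto)
  have "Q = infsum F UNIV" using hs unfolding F_def by (simp add: infsumI)
  then have "norm Q \<le> infsum (\<lambda>x. norm (F x)) UNIV"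
    using norm_infsum_bound[of F UNIV] sumN by simp
  also have "\<dots> \<le> infsum (\<lambda>x. Kc * G x) UNIV"
    by (rule infsum_mono[OF sumN summable_on_cmult_right[OF gs']]) (use nb in auto)
  also have "\<dots> = Kc * infsum G UNIV" by (rule infsum_cmult_right) (use gs' in auto)
  finally show ?thesis unfolding G_def .
qed


theorem theorem2p2:
  fixes p :: "complex \<Rightarrow> complex" and q :: "complex \<Rightarrow> complex \<Rightarrow> complex"
    and b :: "nat \<Rightarrow> nat \<Rightarrow> complex" and a :: complex and \<delta> :: nat
    and n m :: "nat \<Rightarrow> nat" and s :: nat and l :: real
  assumes p_hol: "\<exists>\<rho>>0. p holomorphic_on ball 0 \<rho>"
    and p_lead: "\<exists>C \<rho>. \<rho> > 0 \<and> (\<forall>z. norm z < \<rho> \<longrightarrow>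
                   norm (p z - a * z ^ \<delta>) \<le> C * norm z ^ (\<delta> + 1))"
    and a_nz: "a \<noteq> 0" and \<delta>_ge: "\<delta> \<ge> 2"
    and q_series: "\<exists>\<rho>>0. \<forall>z w. norm z < \<rho> \<and> norm w < \<rho> \<longrightarrow>
                   ((\<lambda>(i, j). b i j * z ^ i * w ^ j) has_sum q z w) UNIV"
    and b00: "b 0 0 = 0" and b01: "b 0 1 = 0"
    and vertices: "{v. v extreme_point_of newton_polygon b} =
                   (\<lambda>k. (real (n k), real (m k))) ` {1..s}"
    and n_incr: "\<forall>i\<in>{1..s}. \<forall>j\<in>{1..s}. i < j \<longrightarrow> n i < n j"
    and m_decr: "\<forall>i\<in>{1..s}. \<forall>j\<in>{1..s}. i < j \<longrightarrow> m j < m i"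
    and s_gt: "s > 1"
    and case2: "real \<delta> \<le> y_intercept (real (n (s - 1)), real (m (s - 1))) (real (n s), real (m s))"
    and l_cond: "(\<delta> \<le> m s \<longrightarrow> l > 0) \<and>
                 (\<delta> > m s \<longrightarrow> 0 < l \<and> l < real (n s) / (real \<delta> - real (m s)))"
  shows "\<forall>\<epsilon>>0. \<exists>r1 r2. 0 < r1 \<and> r1 < \<epsilon> \<and> 0 < r2 \<and> r2 < \<epsilon> \<and>
           (\<lambda>(z, w). (p z, q z w)) ` U_region l r1 r2 \<subseteq> U_region l r1 r2"
proof (intro allI impI)
  fix \<epsilon> :: real
  assume \<epsilon>: "\<epsilon> > 0"
  obtain C \<rho>p where \<rho>p: "\<rho>p > 0" and Cb: "\<And>z. norm z < \<rho>p \<Longrightarrow> norm (p z - a * z ^ \<delta>) \<le> C * norm z ^ (\<delta> + 1)"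
    using p_lead by blast
  obtain \<rho>q where \<rho>q: "\<rho>q > 0" and hsq: "\<And>z w. norm z < \<rho>q \<Longrightarrow> norm w < \<rho>q \<Longrightarrow>
      ((\<lambda>(i, j). b i j * z ^ i * w ^ j) has_sum q z w) UNIV"
    using q_series by blast
  define \<rho>0 where "\<rho>0 = min (\<rho>q / 2) (1 / 2)"
  have \<rho>0: "0 < \<rho>0" "\<rho>0 < \<rho>q" "\<rho>0 \<le> 1 / 2" unfolding \<rho>0_def using \<rho>q by auto
  define G where "G = (\<lambda>(i::nat, j::nat). norm (b i j) * \<rho>0 ^ (i + j))"
  have gs: "G summable_on UNIV"
  proof -
    have "((\<lambda>(i, j). b i j * complex_of_real \<rho>0 ^ i * complex_of_real \<rho>0 ^ j) has_sum
        q (complex_of_real \<rho>0) (complex_of_real \<rho>0)) UNIV"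
      using hsq \<rho>0 by simp
    then have "(\<lambda>x. norm ((\<lambda>(i, j). b i j * complex_of_real \<rho>0 ^ i * complex_of_real \<rho>0 ^ j) x)) summable_on UNIV"
      using has_sum_imp_summable summable_on_iff_abs_summable_on_complex by blast
    moreover have "norm ((\<lambda>(i, j). b i j * complex_of_real \<rho>0 ^ i * complex_of_real \<rho>0 ^ j) x) = G x" for x
      using \<rho>0 unfolding G_def by (cases x) (simp add: norm_mult norm_power power_add)
    ultimately show ?thesis by simp
  qed
  define W where "W = infsum G UNIV"
  have W0: "W \<ge> 0" unfolding W_def G_def by (rule infsum_nonneg) (use \<rho>0 in auto)
  define \<gamma> where "\<gamma> = real (n s)"
  define d where "d = real (m s)"
  define n' where "n' = real (n (s - 1))"
  define m' where "m' = real (m (s - 1))"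
  have s1: "s - 1 \<in> {1..s}" "s \<in> {1..s}" "s - 1 < s" using s_gt by auto
  have nlt: "n' < \<gamma>" unfolding n'_def \<gamma>_def using n_incr s1 by auto
  have mgt: "d < m'" unfolding m'_def d_def using m_decr s1 by auto
  have n0: "0 \<le> n'" unfolding n'_def by simp
  have lpos: "l > 0" using l_cond by (cases "\<delta> \<le> m s") auto
  have key: "l * real \<delta> < \<gamma> + l * d"
  proof (cases "\<delta> \<le> m s")
    case True
    then have "l * real \<delta> \<le> l * d" unfolding d_def using lpos by simp
    then show ?thesis using nlt n0 by simp
  next
    case False
    then have "l < \<gamma> / (real \<delta> - d)" and dd: "real \<delta> - d > 0" using l_cond unfolding \<gamma>_def d_def by auto
    then have "l * (real \<delta> - d) < \<gamma>" by (simp add: pos_less_divide_eq)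
    then show ?thesis by (simp add: algebra_simps)
  qed
  have case2': "real \<delta> \<le> m' - n' * (d - m') / (\<gamma> - n')"
    using case2 unfolding y_intercept_def \<gamma>_def d_def n'_def m'_def by simp
  have ex: "real i + l * real j \<ge> l * real \<delta> \<and> (real i + l * real j = l * real \<delta> \<longrightarrow> real i = 0 \<and> real j = real \<delta>)"
    if "b i j \<noteq> 0" for i j
  proof (rule expo[OF nlt n0 mgt case2' lpos key])
    show "d \<le> real j" unfolding d_def by (rule np_G(1)[OF vertices n_incr m_decr s_gt that])
    show "\<gamma> * m' - d * n' \<le> (m' - d) * real i + (\<gamma> - n') * real j"
      unfolding \<gamma>_def d_def n'_def m'_def by (rule np_G(2)[OF vertices n_incr m_decr s_gt that])
  qed simp
  define M where "M = nat \<lceil>l * real \<delta>\<rceil> + 1"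
  have M: "real M \<ge> l * real \<delta> + 1" unfolding M_def by linarith
  define Fs where "Fs = {(i, j). i < M \<and> j < \<delta> \<and> b i j \<noteq> 0}"
  have finFs: "finite Fs" by (rule finite_subset[of _ "{..<M} \<times> {..<\<delta>}"]) (auto simp: Fs_def)
  obtain \<eta> where \<eta>: "\<eta> > 0" and \<eta>g: "\<forall>x\<in>Fs. (\<lambda>(i, j). real i + l * real j - l * real \<delta>) x > 0 \<longrightarrow>
      (\<lambda>(i, j). real i + l * real j - l * real \<delta>) x \<ge> \<eta>"
    using finite_pos_gap[OF finFs] by blast
  have ex2: "real i + l * real j \<ge> l * real \<delta> + \<eta>" if "b i j \<noteq> 0" "j < \<delta>" "i < M" for i j
  proof -
    have "(i, j) \<in> Fs" unfolding Fs_def using that by auto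
    moreover have "real i + l * real j - l * real \<delta> > 0" using ex[OF that(1)] that(2) by auto
    ultimately show ?thesis using \<eta>g by auto
  qed
  define c where "c = (norm a / 2) powr l"
  have c: "c > 0" unfolding c_def using a_nz by simp
  define K\<rho> where "K\<rho> = \<rho>0 ^ (M + \<delta>)"
  have K\<rho>: "K\<rho> > 0" unfolding K\<rho>_def using \<rho>0 by simp
  define r2 where "r2 = min (min (\<epsilon> / 2) \<rho>0) (c * K\<rho> / (2 * (W + 1)))"
  have r2: "0 < r2" "r2 < \<epsilon>" "r2 \<le> \<rho>0" "r2 \<le> c * K\<rho> / (2 * (W + 1))"
    unfolding r2_def using \<epsilon> \<rho>0 c K\<rho> W0 by auto
  define e1 where "e1 = r2 * c * K\<rho> / (2 * (W + 1))"
  have e1: "e1 > 0" unfolding e1_def using r2 c K\<rho> W0 by auto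
  define Ca where "Ca = \<bar>C\<bar>"
  define r1 where "r1 = min (min (min (\<epsilon> / 2) \<rho>0) (min (\<rho>p / 2) (1 / (2 * (norm a + Ca + 1)))))
                          (min (norm a / (2 * (Ca + 1))) (min (e1 / 2) ((e1 / 2) powr (1 / \<eta>))))"
  have r1: "0 < r1" "r1 < \<epsilon>" "r1 \<le> \<rho>0" "r1 < \<rho>p" "r1 \<le> 1 / (2 * (norm a + Ca + 1))"
    "r1 \<le> norm a / (2 * (Ca + 1))" "r1 \<le> e1 / 2" "r1 \<le> (e1 / 2) powr (1 / \<eta>)"
  proof -
    have Ca: "Ca \<ge> 0" unfolding Ca_def by simp
    have pos: "0 < \<epsilon> / 2" "0 < \<rho>0" "0 < \<rho>p / 2" "0 < 1 / (2 * (norm a + Ca + 1))"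
      "0 < norm a / (2 * (Ca + 1))" "0 < e1 / 2" "0 < (e1 / 2) powr (1 / \<eta>)"
      using \<epsilon> \<rho>0 \<rho>p a_nz e1 Ca by (auto intro!: divide_pos_pos add_nonneg_pos)
    show "0 < r1" unfolding r1_def using pos by simp
    show "r1 < \<epsilon>" "r1 \<le> \<rho>0" "r1 < \<rho>p" "r1 \<le> 1 / (2 * (norm a + Ca + 1))"
      "r1 \<le> norm a / (2 * (Ca + 1))" "r1 \<le> e1 / 2" "r1 \<le> (e1 / 2) powr (1 / \<eta>)"
    proof -
      have "r1 \<le> \<epsilon> / 2" "r1 \<le> \<rho>p / 2" unfolding r1_def by (simp only: min_le_iff_disj order_refl simp_thms)+
      then show "r1 < \<epsilon>" "r1 < \<rho>p" using \<epsilon> \<rho>p by linarith+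
      show "r1 \<le> \<rho>0" "r1 \<le> 1 / (2 * (norm a + Ca + 1))"
        "r1 \<le> norm a / (2 * (Ca + 1))" "r1 \<le> e1 / 2" "r1 \<le> (e1 / 2) powr (1 / \<eta>)"
        unfolding r1_def by (simp only: min_le_iff_disj order_refl simp_thms)+
    qed
  qed
  have Ca: "Ca \<ge> 0" unfolding Ca_def by simp
  have r1\<eta>: "r1 powr \<eta> \<le> e1 / 2"
  proof -
    have "r1 powr \<eta> \<le> ((e1 / 2) powr (1 / \<eta>)) powr \<eta>" using r1 \<eta> by (intro powr_mono2) auto
    also have "\<dots> = e1 / 2" using \<eta> e1 by (simp add: powr_powr)
    finally show ?thesis .
  qed
  define E where "E = r2 ^ \<delta> + r1 + r1 powr \<eta>"
  have WE: "W * E < r2 * c * K\<rho>"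
  proof -
    have r21: "r2 \<le> 1" using r2 \<rho>0 by simp
    have "r2 ^ \<delta> \<le> r2 ^ 2" using r21 r2 \<delta>_ge by (intro power_decreasing) auto
    then have p1: "W * r2 ^ \<delta> \<le> W * r2 * r2" using W0 by (simp add: mult_left_mono power2_eq_square mult.assoc)
    have "W * r2 \<le> W * (c * K\<rho> / (2 * (W + 1)))" using r2 W0 by (intro mult_left_mono) auto
    also have "\<dots> < c * K\<rho> / 2" using c K\<rho> W0 by (simp add: field_simps)
    finally have "W * r2 < c * K\<rho> / 2" .
    then have p1': "W * r2 * r2 < r2 * c * K\<rho> / 2" using r2 by (simp add: mult.commute mult_strict_left_mono)
    have "W * (r1 + r1 powr \<eta>) \<le> W * e1" using r1 r1\<eta> W0 by (intro mult_left_mono) auto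
    also have "\<dots> < r2 * c * K\<rho> / 2" unfolding e1_def using r2 c K\<rho> W0 by (simp add: field_simps)
    finally have p2: "W * (r1 + r1 powr \<eta>) < r2 * c * K\<rho> / 2" .
    have "W * E = W * r2 ^ \<delta> + W * (r1 + r1 powr \<eta>)" unfolding E_def by (simp add: algebra_simps)
    then show ?thesis using p1 p1' p2 by linarith
  qed
  have E0: "E \<ge> 0" unfolding E_def using r1 r2 by auto
  show "\<exists>r1 r2. 0 < r1 \<and> r1 < \<epsilon> \<and> 0 < r2 \<and> r2 < \<epsilon> \<and>
           (\<lambda>(z, w). (p z, q z w)) ` U_region l r1 r2 \<subseteq> U_region l r1 r2"
  proof (intro exI conjI)
    show "0 < r1" "r1 < \<epsilon>" "0 < r2" "r2 < \<epsilon>" using r1 r2 by auto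
    show "(\<lambda>(z, w). (p z, q z w)) ` U_region l r1 r2 \<subseteq> U_region l r1 r2"
    proof (rule subsetI)
      fix y assume "y \<in> (\<lambda>(z, w). (p z, q z w)) ` U_region l r1 r2"
      then obtain z w where zw: "(z, w) \<in> U_region l r1 r2" and y: "y = (p z, q z w)" by auto
      define t where "t = norm z"
      define u where "u = norm w"
      have tr1: "t < r1" and ut: "u < r2 * t powr l" using zw unfolding U_region_def t_def u_def by auto
      have t0: "t > 0"
      proof (rule ccontr)
        assume "\<not> t > 0"
        then have "t = 0" unfolding t_def by simp
        then show False using ut unfolding u_def by simp
      qed
      have u0: "u \<ge> 0" unfolding u_def by simp
      have t1: "t \<le> 1" using tr1 r1 \<rho>0 by simp
      have T: "t powr (l * real \<delta>) > 0" using t0 by simp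
      have pd: "norm (p z - a * z ^ \<delta>) \<le> Ca * t ^ (\<delta> + 1)"
      proof -
        have "norm (p z - a * z ^ \<delta>) \<le> C * t ^ (\<delta> + 1)" using Cb[of z] tr1 r1 unfolding t_def by simp
        also have "\<dots> \<le> Ca * t ^ (\<delta> + 1)" unfolding Ca_def using t0 by (intro mult_right_mono) auto
        finally show ?thesis .
      qed
      have naz: "norm (a * z ^ \<delta>) = norm a * t ^ \<delta>" unfolding t_def by (simp add: norm_mult norm_power)
      have tpow: "t ^ (\<delta> + 1) = t * t ^ \<delta>" by simp
      have Ct: "Ca * t \<le> norm a / 2"
      proof -
        have "Ca * t \<le> (Ca + 1) * r1" using Ca t0 tr1 by (intro mult_mono) auto
        also have "\<dots> \<le> (Ca + 1) * (norm a / (2 * (Ca + 1)))" using r1 Ca by (intro mult_left_mono) auto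
        also have "\<dots> = norm a / 2" proof - have "Ca + 1 > 0" using Ca by simp then show ?thesis by (simp add: field_simps) qed
        finally show ?thesis .
      qed
      have plow: "norm (p z) \<ge> norm a / 2 * t ^ \<delta>"
      proof -
        have "norm (a * z ^ \<delta>) \<le> norm (p z) + norm (p z - a * z ^ \<delta>)"
          using norm_triangle_sub[of "a * z ^ \<delta>" "p z"] by (simp add: norm_minus_commute)
        then have "norm a * t ^ \<delta> - Ca * t * t ^ \<delta> \<le> norm (p z)" using pd naz tpow by (simp add: mult.assoc)
        moreover have "Ca * t * t ^ \<delta> \<le> norm a / 2 * t ^ \<delta>" using Ct t0 by (intro mult_right_mono) auto
        ultimately show ?thesis by linarith
      qed
      have pup: "norm (p z) < r1"
      proof -
        have "norm (p z) \<le> norm (a * z ^ \<delta>) + norm (p z - a * z ^ \<delta>)" by (rule norm_triangle_sub)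
        also have "\<dots> \<le> norm a * t ^ \<delta> + Ca * t * t ^ \<delta>" using pd naz tpow by (simp add: mult.assoc)
        also have "\<dots> \<le> (norm a + Ca) * t ^ \<delta>" using Ca t0 t1 by (simp add: algebra_simps mult_left_mono mult_right_le_one_le)
        also have "\<dots> \<le> (norm a + Ca) * (t * r1)"
        proof (rule mult_left_mono)
          have "t ^ \<delta> = t * t * t ^ (\<delta> - 2)" using \<delta>_ge by (metis le_add_diff_inverse mult.assoc power_add power2_eq_square)
          also have "\<dots> \<le> t * t * 1" using t0 t1 by (intro mult_left_mono power_le_one) auto
          also have "\<dots> \<le> t * r1" using t0 tr1 by simp
          finally show "t ^ \<delta> \<le> t * r1" .
        qed (use Ca in auto)
        also have "\<dots> = t * (r1 * (norm a + Ca))" by (simp add: algebra_simps)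
        also have "\<dots> < t * 1"
        proof (rule mult_strict_left_mono[OF _ t0])
          have "r1 * (norm a + Ca) \<le> 1 / (2 * (norm a + Ca + 1)) * (norm a + Ca)"
            using r1 Ca by (intro mult_right_mono) auto
          also have "\<dots> = (norm a + Ca) / (2 * (norm a + Ca + 1))" by simp
          also have "\<dots> < 1"
          proof (subst pos_divide_less_eq)
            show "0 < 2 * (norm a + Ca + 1)" using Ca norm_ge_zero[of a] by (smt (verit))
            show "norm a + Ca < 1 * (2 * (norm a + Ca + 1))" using Ca norm_ge_zero[of a] by (smt (verit))
          qed
          finally show "r1 * (norm a + Ca) < 1" .
        qed
        finally show ?thesis using tr1 by simp
      qed
      have ppow: "norm (p z) powr l \<ge> c * t powr (l * real \<delta>)"
      proof -
        have e1: "(norm a / 2 * t ^ \<delta>) powr l = (norm a / 2) powr l * (t ^ \<delta>) powr l"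
          by (rule powr_mult)
        have e2: "(t ^ \<delta>) powr l = t powr (l * real \<delta>)"
          using t0 by (simp add: powr_realpow[symmetric] powr_powr mult.commute)
        have "c * t powr (l * real \<delta>) = (norm a / 2 * t ^ \<delta>) powr l"
          unfolding c_def e1 e2 ..
        also have "\<dots> \<le> norm (p z) powr l" using plow lpos a_nz t0 by (intro powr_mono2) auto
        finally show ?thesis .
      qed
      have tl1: "t powr l \<le> 1" using t1 t0 lpos by (intro powr_le1) auto
      have "u < r2" using ut tl1 r2 by (smt (verit) mult_left_le)
      then have wq: "norm w < \<rho>q" using r2 \<rho>0 unfolding u_def by simp
      have zq: "norm z < \<rho>q" using tr1 r1 \<rho>0 unfolding t_def by simp
      define Kc where "Kc = E * t powr (l * real \<delta>) / K\<rho>"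
      have Kc0: "Kc \<ge> 0" unfolding Kc_def using E0 K\<rho> by simp
      have qb: "norm (q z w) \<le> Kc * W"
        unfolding W_def G_def
      proof (rule q_bound[OF hsq[OF zq wq]])
        show "(\<lambda>(i, j). norm (b i j) * \<rho>0 ^ (i + j)) summable_on UNIV" using gs unfolding G_def .
        fix i j assume bij: "b i j \<noteq> 0"
        have "t ^ i * u ^ j * \<rho>0 ^ (M + \<delta>) \<le> \<rho>0 ^ (i + j) * ((r2 ^ \<delta> + r1 + r1 powr \<eta>) * t powr (l * real \<delta>))"
          by (rule term_bound[OF t0 tr1 r1(3) _ u0 less_imp_le[OF ut] r2(1) r2(3) lpos M \<eta>])
             (use \<rho>0 ex[OF bij] ex2[OF bij] in auto)
        then have "t ^ i * u ^ j * K\<rho> \<le> \<rho>0 ^ (i + j) * (E * t powr (l * real \<delta>))"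
          unfolding K\<rho>_def E_def .
        then have "t ^ i * u ^ j \<le> \<rho>0 ^ (i + j) * (E * t powr (l * real \<delta>)) / K\<rho>"
          using K\<rho> by (simp add: pos_le_divide_eq)
        then show "norm z ^ i * norm w ^ j \<le> Kc * \<rho>0 ^ (i + j)" unfolding Kc_def t_def u_def by (simp add: field_simps)
      qed (rule Kc0)
      have "Kc * W = (W * E) * (t powr (l * real \<delta>) / K\<rho>)" unfolding Kc_def by (simp add: field_simps)
      also have "\<dots> < (r2 * c * K\<rho>) * (t powr (l * real \<delta>) / K\<rho>)"
        using WE T K\<rho> by (intro mult_strict_right_mono) auto
      also have "\<dots> = r2 * (c * t powr (l * real \<delta>))" using K\<rho> by (simp add: field_simps)
      also have "\<dots> \<le> r2 * norm (p z) powr l" using ppow r2 by (intro mult_left_mono) auto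
      finally have "norm (q z w) < r2 * norm (p z) powr l" using qb by linarith
      then show "y \<in> U_region l r1 r2" unfolding y U_region_def using pup by simp
    qed
  qed
qed

end
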